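(* For all $\lambda\in(0,1)\setminus\{\frac12\}$, all $x\in\mathbb{R}\setminus\mathbb{Z}$ and all integers $m\ge2$, $H(\lambda,x,m)\neq0$.
   Context: The doubly infinite Lerch zeta function is $H(\lambda,x,m)=\sum_{n\in\mathbb{Z}}\dfrac{e^{2\pi i\lambda n}}{(n-x)^m}$ for $\lambda\in[0,1)$, $x\in\mathbb{C}\setminus\mathbb{Z}$, $m>1$. *)

theory Defs
  imports "HOL-Analysis.Analysis"
begin

text \<open>For m \<ge> 2 and x not an integer the series converges absolutely, so the
  unordered sum (infsum) is the intended value.\<close>
definition lerchH :: "real \<Rightarrow> complex \<Rightarrow> nat \<Rightarrow> complex" where
  "lerchH lam x m =
     (\<Sum>\<^sub>\<infinity>n\<in>(UNIV::int set). exp (2 * of_real pi * \<i> * of_real lam * of_int n) / (of_int n - x) ^ m)"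

end

theory Submission
  imports Defs "HOL-Real_Asymp.Real_Asymp"
begin

lemma int_split_summable:
  fixes f :: "int \<Rightarrow> 'a::banach"
  assumes "(\<lambda>k::nat. f (int k)) summable_on UNIV" "(\<lambda>k::nat. f (- int k - 1)) summable_on UNIV"
  shows "f summable_on UNIV"
proof -
  have inj1: "inj_on (\<lambda>k::nat. int k) UNIV" by (auto simp: inj_on_def)
  have inj2: "inj_on (\<lambda>k::nat. - int k - 1) UNIV" by (auto simp: inj_on_def)
  have A: "f summable_on range (\<lambda>k::nat. int k)"
    using summable_on_reindex[OF inj1, of f] assms(1) by (simp add: o_def)
  have B: "f summable_on range (\<lambda>k::nat. - int k - 1)"
    using summable_on_reindex[OF inj2, of f] assms(2) by (simp add: o_def)
  have U: "range (\<lambda>k::nat. int k) \<union> range (\<lambda>k::nat. - int k - 1) = UNIV"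
  proof -
    have "n \<in> range (\<lambda>k::nat. int k) \<union> range (\<lambda>k::nat. - int k - 1)" for n :: int
    proof (cases "n \<ge> 0")
      case True then show ?thesis by (intro UnI1 image_eqI[of _ _ "nat n"]) auto
    next
      case False then show ?thesis by (intro UnI2 image_eqI[of _ _ "nat (- n - 1)"]) auto
    qed
    then show ?thesis by auto
  qed
  have "f summable_on (range (\<lambda>k::nat. int k) \<union> range (\<lambda>k::nat. - int k - 1))"
    by (intro summable_on_Un_disjoint A B) auto
  then show ?thesis using U by simp
qed

lemma int_split_sums:
  fixes f :: "int \<Rightarrow> 'a::banach"
  assumes "f summable_on UNIV"
  shows "(\<lambda>k::nat. f (int k) + f (- int k - 1)) sums (infsum f UNIV)"
proof -
  have inj1: "inj_on (\<lambda>k::nat. int k) UNIV" by (auto simp: inj_on_def)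
  have inj2: "inj_on (\<lambda>k::nat. - int k - 1) UNIV" by (auto simp: inj_on_def)
  let ?A = "range (\<lambda>k::nat. int k)" and ?B = "range (\<lambda>k::nat. - int k - 1)"
  have U: "?A \<union> ?B = UNIV"
  proof -
    have "n \<in> ?A \<union> ?B" for n :: int
    proof (cases "n \<ge> 0")
      case True then show ?thesis by (intro UnI1 image_eqI[of _ _ "nat n"]) auto
    next
      case False then show ?thesis by (intro UnI2 image_eqI[of _ _ "nat (- n - 1)"]) auto
    qed
    then show ?thesis by auto
  qed
  have D: "?A \<inter> ?B = {}" by auto
  have sA: "f summable_on ?A" by (rule summable_on_subset_banach[OF assms]) auto
  have sB: "f summable_on ?B" by (rule summable_on_subset_banach[OF assms]) auto
  have hA: "((\<lambda>k::nat. f (int k)) has_sum infsum f ?A) UNIV"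
    using has_sum_reindex[OF inj1, of f] has_sum_infsum[OF sA] by (simp add: o_def)
  have hB: "((\<lambda>k::nat. f (- int k - 1)) has_sum infsum f ?B) UNIV"
    using has_sum_reindex[OF inj2, of f] has_sum_infsum[OF sB] by (simp add: o_def)
  have "infsum f UNIV = infsum f ?A + infsum f ?B"
    using infsum_Un_disjoint[OF sA sB D] U by simp
  then show ?thesis using has_sum_imp_sums[OF has_sum_add[OF hA hB]] by simp
qed


lemma summable_nat_shift_pow:
  fixes c :: real assumes "m \<ge> 2"
  shows "summable (\<lambda>k::nat. 1 / \<bar>real k + c\<bar> ^ m)"
proof (rule summable_comparison_test_ev)
  show "summable (\<lambda>k::nat. 2 ^ m * inverse (real k ^ m))"
    using inverse_power_summable[OF assms, where ?'a = real] by (intro summable_mult) simp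
  have "eventually (\<lambda>k::nat. real k \<ge> 2 * \<bar>c\<bar> + 1) sequentially"
    by real_asymp
  then show "eventually (\<lambda>k::nat. norm (1 / \<bar>real k + c\<bar> ^ m) \<le> 2 ^ m * inverse (real k ^ m)) sequentially"
  proof (rule eventually_mono)
    fix k :: nat assume k: "real k \<ge> 2 * \<bar>c\<bar> + 1"
    have "real k / 2 \<le> \<bar>real k + c\<bar>" using k by linarith
    moreover have "0 < real k / 2" using k abs_ge_zero[of c] by linarith
    ultimately have "(real k / 2) ^ m \<le> \<bar>real k + c\<bar> ^ m" by (intro power_mono) auto
    moreover have "0 < (real k / 2) ^ m" using \<open>0 < real k / 2\<close> by simp
    ultimately have "1 / \<bar>real k + c\<bar> ^ m \<le> 1 / (real k / 2) ^ m"
    proof -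
      assume a1: "(real k / 2) ^ m \<le> \<bar>real k + c\<bar> ^ m" and a2: "0 < (real k / 2) ^ m"
      then have "0 < \<bar>real k + c\<bar> ^ m" by linarith
      then show ?thesis using a1 a2 by (intro divide_left_mono) (auto intro!: mult_pos_pos)
    qed
    also have "\<dots> = 2 ^ m * inverse (real k ^ m)" by (simp add: power_divide field_simps)
    finally show "norm (1 / \<bar>real k + c\<bar> ^ m) \<le> 2 ^ m * inverse (real k ^ m)" by simp
  qed
qed

lemma summable_inv_pow:
  fixes x :: real assumes "m \<ge> 2"
  shows "(\<lambda>n::int. 1 / \<bar>real_of_int n - x\<bar> ^ m) summable_on UNIV"
proof (rule int_split_summable)
  show "(\<lambda>k::nat. 1 / \<bar>real_of_int (int k) - x\<bar> ^ m) summable_on UNIV"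
    using summable_nat_shift_pow[OF assms, of "-x"]
    by (subst summable_on_UNIV_nonneg_real_iff) auto
  have "(\<lambda>k::nat. 1 / \<bar>real k + (1 + x)\<bar> ^ m) summable_on UNIV"
    using summable_nat_shift_pow[OF assms, of "1+x"]
    by (subst summable_on_UNIV_nonneg_real_iff) auto
  moreover have "\<bar>real_of_int (- int k - 1) - x\<bar> = \<bar>real k + (1 + x)\<bar>" for k :: nat by linarith
  ultimately show "(\<lambda>k::nat. 1 / \<bar>real_of_int (- int k - 1) - x\<bar> ^ m) summable_on UNIV" by simp
qed


lemma summable_by_norm:
  fixes f :: "'b \<Rightarrow> 'a::banach"
  assumes "M summable_on A" "\<And>x. x \<in> A \<Longrightarrow> norm (f x) \<le> M x"
  shows "f summable_on A"
proof -
  have "(\<lambda>x. norm (M x)) summable_on A" using assms(1) summable_on_iff_abs_summable_on_real by blast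
  moreover have "norm (f x) \<le> norm (M x)" if "x \<in> A" for x
    using assms(2)[OF that] norm_ge_zero[of "f x"] by auto
  ultimately have "(\<lambda>x. norm (f x)) summable_on A"
    by (rule summable_on_comparison_test) auto
  then show ?thesis by (rule abs_summable_summable)
qed

lemma int_series_deriv:
  fixes f f' :: "int \<Rightarrow> real \<Rightarrow> real" and M :: "int \<Rightarrow> real"
  assumes d: "\<And>n a. (f n has_real_derivative f' n a) (at a)"
  and b: "\<And>n a. \<bar>f' n a\<bar> \<le> M n" and sM: "M summable_on UNIV"
  and sf: "\<And>a. (\<lambda>n. f n a) summable_on UNIV"
  shows "((\<lambda>a. infsum (\<lambda>n. f n a) UNIV) has_real_derivative infsum (\<lambda>n. f' n a) UNIV) (at a)"
proof -
  define g where "g = (\<lambda>k::nat. \<lambda>a. f (int k) a + f (- int k - 1) a)"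
  define g' where "g' = (\<lambda>k::nat. \<lambda>a. f' (int k) a + f' (- int k - 1) a)"
  have sf': "(\<lambda>n. f' n a) summable_on UNIV" for a
    by (rule summable_by_norm[OF sM]) (use b in auto)
  have gs: "(\<lambda>k. g k a) sums infsum (\<lambda>n. f n a) UNIV" for a
    unfolding g_def by (rule int_split_sums[OF sf])
  have gs': "(\<lambda>k. g' k a) sums infsum (\<lambda>n. f' n a) UNIV" for a
    unfolding g'_def by (rule int_split_sums[OF sf'])
  have Ms: "summable (\<lambda>k::nat. M (int k) + M (- int k - 1))"
    using int_split_sums[OF sM] by (simp add: sums_summable)
  have uc: "uniformly_convergent_on UNIV (\<lambda>n x. \<Sum>i<n. g' i x)"
  proof (rule Weierstrass_m_test'_ev[OF _ Ms])
    show "\<forall>\<^sub>F n in sequentially. \<forall>x\<in>UNIV. norm (g' n x) \<le> M (int n) + M (- int n - 1)"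
      unfolding g'_def using b by (intro always_eventually allI ballI)
        (smt (verit) real_norm_def)
  qed
  have dg: "\<And>n x. x \<in> UNIV \<Longrightarrow> (g n has_field_derivative g' n x) (at x within UNIV)"
    unfolding g_def g'_def by (auto intro!: derivative_eq_intros d)
  have "((\<lambda>x. \<Sum>n. g n x) has_field_derivative (\<Sum>n. g' n a)) (at a)"
    using has_field_derivative_series'(2)[OF convex_UNIV dg uc, of a a] gs[of a]
    by (auto simp: sums_summable)
  moreover have "(\<lambda>x. \<Sum>n. g n x) = (\<lambda>a. infsum (\<lambda>n. f n a) UNIV)"
    using gs by (auto simp: sums_iff)
  moreover have "(\<Sum>n. g' n a) = infsum (\<lambda>n. f' n a) UNIV"
    using gs' by (auto simp: sums_iff)
  ultimately show ?thesis by simp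
qed


definition sg :: "int \<Rightarrow> real" where "sg n = (if even n then 1 else -1)"

lemma sg_sq [simp]: "sg n * sg n = 1" by (simp add: sg_def)
lemma sg_abs [simp]: "\<bar>sg n\<bar> = 1" by (simp add: sg_def)
lemma sg_add: "sg (n + k) = sg n * sg k" by (simp add: sg_def)
lemma cos_pi_int: "cos (pi * of_int n) = sg n" unfolding sg_def by (simp add: cos_npi_int)

lemma cmod_int_real: "cmod (complex_of_int n - complex_of_real x) = \<bar>of_int n - x\<bar>"
proof -
  have "complex_of_int n - complex_of_real x = complex_of_real (of_int n - x)" by simp
  then show ?thesis by (simp only: norm_of_real)
qed
lemma cis_pi_int: "cis (pi * of_int n) = complex_of_real (sg n)"
  unfolding sg_def by (simp add: cis.ctr cos_npi_int sin_npi_int Complex_eq)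

definition Tm :: "nat \<Rightarrow> real \<Rightarrow> real \<Rightarrow> complex" where
  "Tm m th x = (\<Sum>\<^sub>\<infinity>n::int. cis (th * of_int n) / complex_of_real ((of_int n - x) ^ m))"
definition Cf :: "nat \<Rightarrow> real \<Rightarrow> real \<Rightarrow> real" where
  "Cf m x a = (\<Sum>\<^sub>\<infinity>n::int. sg n * cos (a * (of_int n - x)) / (of_int n - x) ^ m)"
definition Sf :: "nat \<Rightarrow> real \<Rightarrow> real \<Rightarrow> real" where
  "Sf m x a = (\<Sum>\<^sub>\<infinity>n::int. sg n * sin (a * (of_int n - x)) / (of_int n - x) ^ m)"

lemma sumT: assumes "m \<ge> 2"
  shows "(\<lambda>n::int. cis (th * of_int n) / complex_of_real ((of_int n - x) ^ m)) summable_on UNIV"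
  by (rule summable_by_norm[OF summable_inv_pow[OF assms, of x]])
     (simp add: norm_divide norm_power cmod_int_real)

lemma sumC: assumes "m \<ge> 2"
  shows "(\<lambda>n::int. sg n * cos (a * (of_int n - x)) / (of_int n - x) ^ m) summable_on UNIV"
proof (rule summable_by_norm[OF summable_inv_pow[OF assms, of x]])
  fix n :: int
  have "\<bar>sg n * cos (a * (of_int n - x))\<bar> \<le> 1" by (simp add: abs_mult)
  then show "norm (sg n * cos (a * (of_int n - x)) / (of_int n - x) ^ m) \<le> 1 / \<bar>of_int n - x\<bar> ^ m"
    by (simp add: abs_mult power_abs divide_right_mono)
qed

lemma sumS: assumes "m \<ge> 2"
  shows "(\<lambda>n::int. sg n * sin (a * (of_int n - x)) / (of_int n - x) ^ m) summable_on UNIV"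
proof (rule summable_by_norm[OF summable_inv_pow[OF assms, of x]])
  fix n :: int
  have "\<bar>sg n * sin (a * (of_int n - x))\<bar> \<le> 1" by (simp add: abs_mult)
  then show "norm (sg n * sin (a * (of_int n - x)) / (of_int n - x) ^ m) \<le> 1 / \<bar>of_int n - x\<bar> ^ m"
    by (simp add: abs_mult power_abs divide_right_mono)
qed

lemma Tm_CS:
  assumes "m \<ge> 2"
  shows "Tm m th x = cis ((th - pi) * x) * Complex (Cf m x (th - pi)) (Sf m x (th - pi))"
proof -
  define a where "a = th - pi"
  have hC: "((\<lambda>n::int. sg n * cos (a * (of_int n - x)) / (of_int n - x) ^ m) has_sum Cf m x a) UNIV"
    unfolding Cf_def by (rule has_sum_infsum[OF sumC[OF assms]])
  have hS: "((\<lambda>n::int. sg n * sin (a * (of_int n - x)) / (of_int n - x) ^ m) has_sum Sf m x a) UNIV"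
    unfolding Sf_def by (rule has_sum_infsum[OF sumS[OF assms]])
  have h: "((\<lambda>n::int. cis (a * x) * (complex_of_real (sg n * cos (a * (of_int n - x)) / (of_int n - x) ^ m)
        + \<i> * complex_of_real (sg n * sin (a * (of_int n - x)) / (of_int n - x) ^ m)))
      has_sum cis (a * x) * (complex_of_real (Cf m x a) + \<i> * complex_of_real (Sf m x a))) UNIV"
    by (intro has_sum_cmult_right has_sum_add has_sum_of_real hC hS)
  have eq: "cis (a * x) * (complex_of_real (sg n * cos (a * (of_int n - x)) / (of_int n - x) ^ m)
        + \<i> * complex_of_real (sg n * sin (a * (of_int n - x)) / (of_int n - x) ^ m))
      = cis (th * of_int n) / complex_of_real ((of_int n - x) ^ m)" for n :: int
  proof -
    have e1: "complex_of_real (sg n * cos (a * (of_int n - x)) / (of_int n - x) ^ m)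
        + \<i> * complex_of_real (sg n * sin (a * (of_int n - x)) / (of_int n - x) ^ m)
        = complex_of_real (sg n) * cis (a * (of_int n - x)) / complex_of_real ((of_int n - x) ^ m)"
      by (simp add: cis.ctr Complex_eq) (simp add: algebra_simps add_divide_distrib)
    have "cis (a * x) * (complex_of_real (sg n * cos (a * (of_int n - x)) / (of_int n - x) ^ m)
        + \<i> * complex_of_real (sg n * sin (a * (of_int n - x)) / (of_int n - x) ^ m))
        = cis (a * x) * complex_of_real (sg n) * cis (a * (of_int n - x)) / complex_of_real ((of_int n - x) ^ m)"
      unfolding e1 by simp
    also have "\<dots> = cis (a * x + a * (of_int n - x)) * cis (pi * of_int n) / complex_of_real ((of_int n - x) ^ m)"
      by (simp add: cis_pi_int cis_mult[symmetric] mult_ac)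
    also have "\<dots> = cis (th * of_int n) / complex_of_real ((of_int n - x) ^ m)"
      by (simp add: cis_mult a_def algebra_simps)
    finally show ?thesis .
  qed
  have "Tm m th x = cis (a * x) * (complex_of_real (Cf m x a) + \<i> * complex_of_real (Sf m x a))"
    using h unfolding Tm_def eq by (rule infsumI)
  then show ?thesis by (simp add: a_def Complex_eq)
qed

lemma lerchH_Tm: "lerchH lam (complex_of_real x) m = Tm m (2 * pi * lam) x"
  unfolding lerchH_def Tm_def
proof (rule infsum_cong)
  fix n :: int
  have "exp (2 * complex_of_real pi * \<i> * complex_of_real lam * of_int n) = cis (2 * pi * lam * of_int n)"
    by (simp add: cis_conv_exp mult_ac)
  moreover have "(of_int n - complex_of_real x) ^ m = complex_of_real ((of_int n - x) ^ m)" by simp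
  ultimately show "exp (2 * complex_of_real pi * \<i> * complex_of_real lam * of_int n) / (of_int n - complex_of_real x) ^ m
     = cis (2 * pi * lam * of_int n) / complex_of_real ((of_int n - x) ^ m)" by simp
qed


lemma notint_ne: assumes "x \<notin> \<int>" shows "real_of_int n - x \<noteq> 0"
  using assms by (metis Ints_of_int eq_iff_diff_eq_0)

lemma Cf_deriv:
  assumes "m \<ge> 2" "x \<notin> \<int>"
  shows "(Cf (Suc m) x has_real_derivative - Sf m x a) (at a)"
proof -
  define f where "f = (\<lambda>(n::int) a. sg n * cos (a * (of_int n - x)) / (of_int n - x) ^ Suc m)"
  define f' where "f' = (\<lambda>(n::int) a. - (sg n * sin (a * (of_int n - x)) / (of_int n - x) ^ m))"
  have d: "(f n has_real_derivative f' n a) (at a)" for n a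
  proof -
    have ne: "of_int n - x \<noteq> 0" using notint_ne[OF assms(2)] .
    have D: "((\<lambda>a. sg n * cos (a * (of_int n - x)) / (of_int n - x) ^ Suc m) has_real_derivative
       sg n * (- sin (a * (of_int n - x)) * (of_int n - x)) / (of_int n - x) ^ Suc m) (at a)"
      by (intro DERIV_cdivide DERIV_cmult) (auto intro!: derivative_eq_intros)
    have E: "sg n * (- sin (a * (of_int n - x)) * (of_int n - x)) / (of_int n - x) ^ Suc m = f' n a"
      unfolding f'_def using ne by (simp add: power_Suc field_simps)
    show ?thesis using D unfolding E f_def .
  qed
  have b: "\<bar>f' n a\<bar> \<le> 1 / \<bar>of_int n - x\<bar> ^ m" for n a
  proof -
    have "\<bar>sg n * sin (a * (of_int n - x))\<bar> \<le> 1" by (simp add: abs_mult)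
    then show ?thesis unfolding f'_def by (simp add: abs_mult power_abs divide_right_mono)
  qed
  have sf: "(\<lambda>n. f n a) summable_on UNIV" for a
    unfolding f_def using sumC[of "Suc m" a x] assms by simp
  have "((\<lambda>a. infsum (\<lambda>n. f n a) UNIV) has_real_derivative infsum (\<lambda>n. f' n a) UNIV) (at a)"
    by (rule int_series_deriv[OF d b summable_inv_pow[OF assms(1)] sf])
  moreover have "(\<lambda>a. infsum (\<lambda>n. f n a) UNIV) = Cf (Suc m) x"
    unfolding f_def Cf_def by auto
  moreover have "infsum (\<lambda>n. f' n a) UNIV = - Sf m x a"
    unfolding f'_def Sf_def by (simp add: infsum_uminus)
  ultimately show ?thesis by simp
qed

lemma Sf_deriv:
  assumes "m \<ge> 2" "x \<notin> \<int>"
  shows "(Sf (Suc m) x has_real_derivative Cf m x a) (at a)"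
proof -
  define f where "f = (\<lambda>(n::int) a. sg n * sin (a * (of_int n - x)) / (of_int n - x) ^ Suc m)"
  define f' where "f' = (\<lambda>(n::int) a. sg n * cos (a * (of_int n - x)) / (of_int n - x) ^ m)"
  have d: "(f n has_real_derivative f' n a) (at a)" for n a
  proof -
    have ne: "of_int n - x \<noteq> 0" using notint_ne[OF assms(2)] .
    have D: "((\<lambda>a. sg n * sin (a * (of_int n - x)) / (of_int n - x) ^ Suc m) has_real_derivative
       sg n * (cos (a * (of_int n - x)) * (of_int n - x)) / (of_int n - x) ^ Suc m) (at a)"
      by (intro DERIV_cdivide DERIV_cmult) (auto intro!: derivative_eq_intros)
    have E: "sg n * (cos (a * (of_int n - x)) * (of_int n - x)) / (of_int n - x) ^ Suc m = f' n a"
      unfolding f'_def using ne by (simp add: power_Suc field_simps)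
    show ?thesis using D unfolding E f_def .
  qed
  have b: "\<bar>f' n a\<bar> \<le> 1 / \<bar>of_int n - x\<bar> ^ m" for n a
  proof -
    have "\<bar>sg n * cos (a * (of_int n - x))\<bar> \<le> 1" by (simp add: abs_mult)
    then show ?thesis unfolding f'_def by (simp add: abs_mult power_abs divide_right_mono)
  qed
  have sf: "(\<lambda>n. f n a) summable_on UNIV" for a
    unfolding f_def using sumS[of "Suc m" a x] assms by simp
  have "((\<lambda>a. infsum (\<lambda>n. f n a) UNIV) has_real_derivative infsum (\<lambda>n. f' n a) UNIV) (at a)"
    by (rule int_series_deriv[OF d b summable_inv_pow[OF assms(1)] sf])
  moreover have "(\<lambda>a. infsum (\<lambda>n. f n a) UNIV) = Sf (Suc m) x"
    unfolding f_def Sf_def by auto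
  moreover have "infsum (\<lambda>n. f' n a) UNIV = Cf m x a"
    unfolding f'_def Cf_def by simp
  ultimately show ?thesis by simp
qed

lemma bij_shift: "bij_betw (\<lambda>j::int. j + k) UNIV UNIV"
  by (rule bij_betwI[of _ _ _ "\<lambda>j. j - k"]) auto

lemma Cf_shift: "Cf m (x + of_int k) a = sg k * Cf m x a"
proof -
  have "Cf m (x + of_int k) a = (\<Sum>\<^sub>\<infinity>j::int. sg (j + k) * cos (a * (of_int (j + k) - (x + of_int k))) / (of_int (j + k) - (x + of_int k)) ^ m)"
    unfolding Cf_def by (rule infsum_reindex_bij_betw[OF bij_shift, symmetric])
  also have "\<dots> = (\<Sum>\<^sub>\<infinity>j::int. sg k * (sg j * cos (a * (of_int j - x)) / (of_int j - x) ^ m))"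
    by (simp add: sg_add mult_ac)
  also have "\<dots> = sg k * Cf m x a" unfolding Cf_def by (rule infsum_cmult_right')
  finally show ?thesis .
qed

lemma Sf_shift: "Sf m (x + of_int k) a = sg k * Sf m x a"
proof -
  have "Sf m (x + of_int k) a = (\<Sum>\<^sub>\<infinity>j::int. sg (j + k) * sin (a * (of_int (j + k) - (x + of_int k))) / (of_int (j + k) - (x + of_int k)) ^ m)"
    unfolding Sf_def by (rule infsum_reindex_bij_betw[OF bij_shift, symmetric])
  also have "\<dots> = (\<Sum>\<^sub>\<infinity>j::int. sg k * (sg j * sin (a * (of_int j - x)) / (of_int j - x) ^ m))"
    by (simp add: sg_add mult_ac)
  also have "\<dots> = sg k * Sf m x a" unfolding Sf_def by (rule infsum_cmult_right')
  finally show ?thesis .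
qed

lemma Tm_shift: "Tm m th (x + of_int k) = cis (th * of_int k) * Tm m th x"
proof -
  have "Tm m th (x + of_int k) = (\<Sum>\<^sub>\<infinity>j::int. cis (th * of_int (j + k)) / complex_of_real ((of_int (j + k) - (x + of_int k)) ^ m))"
    unfolding Tm_def by (rule infsum_reindex_bij_betw[OF bij_shift, symmetric])
  also have "\<dots> = (\<Sum>\<^sub>\<infinity>j::int. cis (th * of_int k) * (cis (th * of_int j) / complex_of_real ((of_int j - x) ^ m)))"
    by (simp add: cis_mult distrib_left add.commute)
  also have "\<dots> = cis (th * of_int k) * Tm m th x" unfolding Tm_def by (rule infsum_cmult_right')
  finally show ?thesis .
qed

lemma Cf_neg: "Cf m x (- a) = Cf m x a"
  unfolding Cf_def by simp

lemma Sf_neg: "Sf m x (- a) = - Sf m x a"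
  unfolding Sf_def by (simp add: infsum_uminus[symmetric])

lemma Sf_zero: "Sf m x 0 = 0"
  unfolding Sf_def by simp

definition Zf :: "nat \<Rightarrow> real \<Rightarrow> real" where
  "Zf m x = (\<Sum>\<^sub>\<infinity>n::int. 1 / (of_int n - x) ^ m)"

lemma Cf_pi: "Cf m x pi = cos (pi * x) * Zf m x"
proof -
  have "sg n * cos (pi * (of_int n - x)) = cos (pi * x)" for n :: int
  proof -
    have "cos (pi * (of_int n - x)) = cos (pi * of_int n) * cos (pi * x) + sin (pi * of_int n) * sin (pi * x)"
      by (simp add: right_diff_distrib cos_diff)
    then show ?thesis by (simp add: cos_pi_int sin_npi_int mult.assoc[symmetric] del: cos_npi_int)
  qed
  then have "Cf m x pi = (\<Sum>\<^sub>\<infinity>n::int. cos (pi * x) * (1 / (of_int n - x) ^ m))"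
    unfolding Cf_def by simp
  also have "\<dots> = cos (pi * x) * Zf m x" unfolding Zf_def by (rule infsum_cmult_right')
  finally show ?thesis .
qed

lemma sumZ: fixes x :: real assumes "m \<ge> 2" shows "(\<lambda>n::int. 1 / (of_int n - x) ^ m) summable_on UNIV"
  by (rule summable_by_norm[OF summable_inv_pow[OF assms, of x]]) (simp add: power_abs)

lemma Zf_sums:
  assumes "m \<ge> 2"
  shows "(\<lambda>k::nat. 1 / (real k + 1 - x) ^ m + 1 / (- real k - x) ^ m) sums Zf m x"
proof -
  define f where "f = (\<lambda>n::int. 1 / (of_int n - x) ^ m)"
  have "Zf m x = infsum (\<lambda>j. f (j + 1)) UNIV"
    unfolding Zf_def f_def by (rule infsum_reindex_bij_betw[OF bij_shift, symmetric])
  moreover have "(\<lambda>j. f (j + 1)) summable_on UNIV"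
    using summable_on_reindex_bij_betw[OF bij_shift, of f 1] sumZ[OF assms, of x] f_def by simp
  ultimately have "(\<lambda>k::nat. f (int k + 1) + f (- int k - 1 + 1)) sums Zf m x"
    using int_split_sums[of "\<lambda>j. f (j + 1)"] by simp
  then show ?thesis unfolding f_def by (simp add: add.commute)
qed

lemma Zf_sign:
  assumes "odd m" "m \<ge> 2" "0 < x" "x < 1"
  shows "cos (pi * x) * Zf m x \<le> 0"
proof -
  have tm: "1 / (real k + 1 - x) ^ m + 1 / (- real k - x) ^ m = 1 / (real k + 1 - x) ^ m - 1 / (real k + x) ^ m" for k :: nat
  proof -
    have "(- real k - x) ^ m = - ((real k + x) ^ m)"
    proof -
      have "- real k - x = - (real k + x)" by simp
      then show ?thesis using power_minus_odd[OF assms(1), of "real k + x"] by simp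
    qed
    then show ?thesis by simp
  qed
  have S: "(\<lambda>k::nat. 1 / (real k + 1 - x) ^ m - 1 / (real k + x) ^ m) sums Zf m x"
    using Zf_sums[OF assms(2), of x] tm by simp
  show ?thesis
  proof (cases "x \<le> 1/2")
    case True
    have "0 \<le> cos (pi * x)"
    proof (rule cos_ge_zero)
      have "0 \<le> pi * x" using assms(3) by simp
      then show "- (pi / 2) \<le> pi * x" using pi_gt_zero by linarith
      have "pi * x \<le> pi * (1/2)" using True by (intro mult_left_mono) auto
      then show "pi * x \<le> pi / 2" by simp
    qed
    moreover have "Zf m x \<le> 0"
    proof -
      have "1 / (real k + 1 - x) ^ m - 1 / (real k + x) ^ m \<le> 0" for k :: nat
      proof -
        have "(real k + x) ^ m \<le> (real k + 1 - x) ^ m" using True assms(3) by (intro power_mono) auto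
        moreover have "0 < (real k + x) ^ m" using assms(3) by simp
        ultimately have "1 / (real k + 1 - x) ^ m \<le> 1 / (real k + x) ^ m"
          by (intro divide_left_mono) (auto intro!: mult_pos_pos)
        then show ?thesis by simp
      qed
      then show ?thesis using sums_le[OF _ S sums_zero] by auto
    qed
    ultimately show ?thesis by (simp add: mult_nonneg_nonpos)
  next
    case False
    have "cos (pi * x) \<le> 0"
    proof -
      have "0 \<le> cos (pi - pi * x)"
      proof (rule cos_ge_zero)
        have "pi * x \<le> pi * 1" using assms(4) by (intro mult_left_mono) auto
        then show "- (pi / 2) \<le> pi - pi * x" using pi_gt_zero by linarith
        have "pi * (1/2) \<le> pi * x" using False by (intro mult_left_mono) auto
        then show "pi - pi * x \<le> pi / 2" by simp
      qed
      then show ?thesis by simp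
    qed
    moreover have "Zf m x \<ge> 0"
    proof -
      have "1 / (real k + 1 - x) ^ m - 1 / (real k + x) ^ m \<ge> 0" for k :: nat
      proof -
        have "(real k + 1 - x) ^ m \<le> (real k + x) ^ m" using False assms(4) by (intro power_mono) auto
        moreover have "0 < (real k + 1 - x) ^ m" using assms(4) by simp
        ultimately have "1 / (real k + x) ^ m \<le> 1 / (real k + 1 - x) ^ m"
          by (intro divide_left_mono) (auto intro!: mult_pos_pos)
        then show ?thesis by simp
      qed
      then show ?thesis using sums_le[OF _ sums_zero S] by auto
    qed
    ultimately show ?thesis by (simp add: mult_nonpos_nonneg)
  qed
qed


lemma unit_notint: assumes "0 < x" "x < (1::real)" shows "x \<notin> \<int>"
proof
  assume "x \<in> \<int>"
  then obtain k where "x = of_int k" by (auto elim: Ints_cases)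
  with assms show False by auto
qed

lemma main_induct:
  assumes x: "0 < x" "x < 1"
  and base: "\<And>a. 0 < a \<Longrightarrow> a < pi \<Longrightarrow> Sf 2 x a < 0"
  and m: "m \<ge> 2"
  shows "(even m \<longrightarrow> (\<forall>a. 0 < a \<and> a < pi \<longrightarrow> Sf m x a < 0)) \<and>
         (odd m \<longrightarrow> (\<forall>a. 0 \<le> a \<and> a < pi \<longrightarrow> Cf m x a < 0))"
  using m
proof (induction m rule: nat_induct_at_least)
  case base
  then show ?case using assms(3) by auto
next
  case (Suc n)
  have xn: "x \<notin> \<int>" using unit_notint[OF x] .
  show ?case
  proof (cases "even n")
    case True
    then have IH: "\<And>a. 0 < a \<Longrightarrow> a < pi \<Longrightarrow> Sf n x a < 0" using Suc.IH by auto
    have "Cf (Suc n) x a < 0" if a: "0 \<le> a" "a < pi" for a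
    proof -
      have cont: "continuous_on {a..pi} (Cf (Suc n) x)"
        using Cf_deriv[OF Suc.hyps xn] by (intro continuous_at_imp_continuous_on ballI DERIV_isCont) auto
      have "Cf (Suc n) x a < Cf (Suc n) x pi"
      proof (rule DERIV_pos_imp_increasing_open[OF a(2) _ cont])
        fix t assume t: "a < t" "t < pi"
        show "\<exists>y. (Cf (Suc n) x has_real_derivative y) (at t) \<and> 0 < y"
          using Cf_deriv[OF Suc.hyps xn, of t] IH[of t] t a by auto
      qed
      also have "\<dots> \<le> 0" unfolding Cf_pi using Zf_sign[of "Suc n" x] True Suc.hyps x by auto
      finally show ?thesis .
    qed
    then show ?thesis using True by auto
  next
    case False
    then have IH: "\<And>a. 0 \<le> a \<Longrightarrow> a < pi \<Longrightarrow> Cf n x a < 0" using Suc.IH by auto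
    have "Sf (Suc n) x a < 0" if a: "0 < a" "a < pi" for a
    proof -
      have "Sf (Suc n) x a < Sf (Suc n) x 0"
      proof (rule DERIV_neg_imp_decreasing[OF a(1)])
        fix t assume t: "0 \<le> t" "t \<le> a"
        show "\<exists>y. (Sf (Suc n) x has_real_derivative y) (at t) \<and> y < 0"
          using Sf_deriv[OF Suc.hyps xn, of t] IH[of t] t a by auto
      qed
      then show ?thesis by (simp add: Sf_zero)
    qed
    then show ?thesis using False by auto
  qed
qed


lemma notint_half: fixes x :: real assumes "x \<notin> \<int>" shows "x / 2 \<notin> \<int>" "(x - 1) / 2 \<notin> \<int>"
proof -
  show "x / 2 \<notin> \<int>"
  proof
    assume "x / 2 \<in> \<int>" then obtain k where "x / 2 = of_int k" by (auto elim: Ints_cases)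
    then have "x = of_int (2 * k)" by simp
    with assms show False by auto
  qed
  show "(x - 1) / 2 \<notin> \<int>"
  proof
    assume "(x - 1) / 2 \<in> \<int>" then obtain k where "(x - 1) / 2 = of_int k" by (auto elim: Ints_cases)
    then have "x = of_int (2 * k + 1)" by simp
    with assms show False by auto
  qed
qed

lemma Tm_double:
  assumes "x \<notin> \<int>"
  shows "Tm 2 th x = (Tm 2 (2 * th) (x / 2) + cis th * Tm 2 (2 * th) ((x - 1) / 2)) / 4"
proof -
  define f where "f = (\<lambda>n::int. cis (th * of_int n) / complex_of_real ((of_int n - x) ^ 2))"
  have sf: "f summable_on UNIV" unfolding f_def by (rule sumT) simp
  let ?E = "range (\<lambda>j::int. 2 * j)" and ?O = "range (\<lambda>j::int. 2 * j + 1)"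
  have U: "?E \<union> ?O = UNIV"
  proof -
    have "n \<in> ?E \<union> ?O" for n :: int
    proof (cases "even n")
      case True then obtain j where "n = 2 * j" by (auto elim: evenE)
      then show ?thesis by auto
    next
      case False then obtain j where "n = 2 * j + 1" by (auto elim: oddE)
      then show ?thesis by auto
    qed
    then show ?thesis by auto
  qed
  have D: "?E \<inter> ?O = {}" by auto (presburger)
  have injE: "inj_on (\<lambda>j::int. 2 * j) UNIV" by (auto simp: inj_on_def)
  have injO: "inj_on (\<lambda>j::int. 2 * j + 1) UNIV" by (auto simp: inj_on_def)
  have "Tm 2 th x = infsum f (?E \<union> ?O)" unfolding Tm_def f_def U ..
  also have "\<dots> = infsum f ?E + infsum f ?O"
    by (rule infsum_Un_disjoint[OF summable_on_subset_banach[OF sf] summable_on_subset_banach[OF sf] D]) auto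
  also have "infsum f ?E = infsum (\<lambda>j. f (2 * j)) UNIV"
    using infsum_reindex[OF injE, of f] by (simp add: o_def)
  also have "\<dots> = infsum (\<lambda>j. cis ((2 * th) * of_int j) / complex_of_real ((of_int j - x / 2) ^ 2) * (1 / 4)) UNIV"
  proof (rule infsum_cong)
    fix j :: int
    have "(of_int (2 * j) - x) ^ 2 = 4 * (of_int j - x / 2) ^ 2" by (simp add: power2_eq_square algebra_simps)
    then show "f (2 * j) = cis ((2 * th) * of_int j) / complex_of_real ((of_int j - x / 2) ^ 2) * (1 / 4)"
      unfolding f_def by (simp add: mult_ac)
  qed
  also have "\<dots> = Tm 2 (2 * th) (x / 2) * (1 / 4)" unfolding Tm_def by (rule infsum_cmult_left')
  also have "infsum f ?O = infsum (\<lambda>j. f (2 * j + 1)) UNIV"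
    using infsum_reindex[OF injO, of f] by (simp add: o_def)
  also have "\<dots> = infsum (\<lambda>j. (cis th * (cis ((2 * th) * of_int j) / complex_of_real ((of_int j - (x - 1) / 2) ^ 2))) * (1 / 4)) UNIV"
  proof (rule infsum_cong)
    fix j :: int
    have "(of_int (2 * j + 1) - x) ^ 2 = 4 * (of_int j - (x - 1) / 2) ^ 2"
      by (simp add: power2_eq_square divide_simps) (simp add: algebra_simps)
    moreover have "cis (th * of_int (2 * j + 1)) = cis th * cis ((2 * th) * of_int j)"
      by (simp add: cis_mult algebra_simps)
    ultimately show "f (2 * j + 1) = (cis th * (cis ((2 * th) * of_int j) / complex_of_real ((of_int j - (x - 1) / 2) ^ 2))) * (1 / 4)"
      unfolding f_def by (simp add: mult_ac)
  qed
  also have "\<dots> = (cis th * Tm 2 (2 * th) ((x - 1) / 2)) * (1 / 4)"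
    unfolding Tm_def by (simp only: infsum_cmult_left' infsum_cmult_right')
  finally show ?thesis by (simp add: field_simps)
qed

lemma Tm_period: "Tm m (th - 2 * pi) x = Tm m th x"
  unfolding Tm_def
proof (rule infsum_cong)
  fix n :: int
  have "cis ((th - 2 * pi) * of_int n) = cis (th * of_int n) * cis (pi * of_int (- 2 * n))"
    by (simp add: cis_mult algebra_simps)
  also have "\<dots> = cis (th * of_int n)" by (simp only: cis_pi_int) (simp add: sg_def)
  finally show "cis ((th - 2 * pi) * of_int n) / complex_of_real ((of_int n - x) ^ m) =
      cis (th * of_int n) / complex_of_real ((of_int n - x) ^ m)" by simp
qed

definition Psi :: "real \<Rightarrow> real \<Rightarrow> complex" where
  "Psi th x = cis ((th - pi) * x) * Complex (pi^2 * cos (pi * x) / sin (pi * x) ^ 2) (- (th - pi) * pi / sin (pi * x))"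

lemma sg_neg: "sg (- k) = sg k" by (simp add: sg_def)

lemma Psi_shift: "Psi th (x + of_int k) = cis (th * of_int k) * Psi th x"
proof -
  have c: "cos (pi * (x + of_int k)) = sg k * cos (pi * x)"
    by (simp add: distrib_left cos_add sin_npi_int cos_pi_int del: cos_npi_int)
  have s: "sin (pi * (x + of_int k)) = sg k * sin (pi * x)"
    by (simp add: distrib_left sin_add sin_npi_int cos_pi_int del: cos_npi_int)
  have e: "cis ((th - pi) * (x + of_int k)) = cis ((th - pi) * x) * cis (th * of_int k) * complex_of_real (sg k)"
  proof -
    have "cis ((th - pi) * (x + of_int k)) = cis ((th - pi) * x) * cis (th * of_int k) * cis (pi * of_int (- k))"
      by (simp add: cis_mult algebra_simps)
    then show ?thesis by (simp only: cis_pi_int sg_neg)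
  qed
  have sq: "sg k ^ 2 = 1" by (simp add: power2_eq_square)
  have "Complex (pi^2 * (sg k * cos (pi * x)) / (sg k * sin (pi * x)) ^ 2) (- (th - pi) * pi / (sg k * sin (pi * x)))
      = complex_of_real (sg k) * Complex (pi^2 * cos (pi * x) / sin (pi * x) ^ 2) (- (th - pi) * pi / sin (pi * x))"
    by (simp add: complex_eq_iff power_mult_distrib sq) (simp add: sg_def)
  then show ?thesis unfolding Psi_def c s e
    by (simp add: mult_ac) (simp add: mult.assoc[symmetric] of_real_mult[symmetric] del: of_real_mult)
qed


lemma core1:
  fixes c s t p :: real assumes "s\<noteq>0" "c\<noteq>0"
  shows "(complex_of_real c - \<i> * complex_of_real s) * (complex_of_real (p^2*(c^2-s^2)/(2 * s * c)^2) + \<i> * complex_of_real (-(t-p)*p/(2 * s * c)))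
    = (complex_of_real (p^2*c/s^2) + \<i> * complex_of_real (-(2*t-p)*p/s) + \<i> * (complex_of_real (p^2 * s/(-c)^2) + \<i> * complex_of_real (-(2*t-p)*p/(-c)))) / 4"
  using assms by (simp add: complex_eq_iff field_simps power2_eq_square)

lemma core2:
  fixes c s t p :: real assumes "s\<noteq>0" "c\<noteq>0"
  shows "(complex_of_real c + \<i> * complex_of_real s) * (complex_of_real (p^2*(c^2-s^2)/(2 * s * c)^2) + \<i> * complex_of_real (-(t-p)*p/(2 * s * c)))
    = (complex_of_real (p^2*c/s^2) + \<i> * complex_of_real (-(2*t-2*p-p)*p/s) - \<i> * (complex_of_real (p^2 * s/(-c)^2) + \<i> * complex_of_real (-(2*t-2*p-p)*p/(-c)))) / 4"
  using assms by (simp add: complex_eq_iff field_simps power2_eq_square)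

lemma Psi_double:
  assumes "x \<notin> \<int>"
  shows "Psi th x = (Psi (2 * th) (x / 2) + cis th * Psi (2 * th) ((x - 1) / 2)) / 4"
    and "Psi th x = (Psi (2 * th - 2 * pi) (x / 2) + cis th * Psi (2 * th - 2 * pi) ((x - 1) / 2)) / 4"
proof -
  define h where "h = pi * x / 2"
  define s where "s = sin h"
  define c where "c = cos h"
  have sinx: "sin (pi * x) = 2 * s * c" unfolding s_def c_def h_def using sin_double[of "pi * x / 2"] by simp
  have cosx: "cos (pi * x) = c^2 - s^2" unfolding s_def c_def h_def using cos_double[of "pi * x / 2"] by simp
  have "sin (pi * x) \<noteq> 0" using assms sin_times_pi_eq_0[of x] by (simp add: mult.commute)
  then have sc: "s \<noteq> 0" "c \<noteq> 0" using sinx by auto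
  have s1: "sin (pi * (x / 2)) = s" "cos (pi * (x / 2)) = c" unfolding s_def c_def h_def by simp_all
  have s2: "sin (pi * ((x - 1) / 2)) = - c" "cos (pi * ((x - 1) / 2)) = s"
  proof -
    have eq: "pi * ((x - 1) / 2) = h - pi / 2" unfolding h_def by (simp add: field_simps)
    show "sin (pi * ((x - 1) / 2)) = - c" unfolding eq s_def c_def by (simp add: sin_diff)
    show "cos (pi * ((x - 1) / 2)) = s" unfolding eq s_def c_def by (simp add: cos_diff)
  qed
  have g: "cis th * cis (- th) = 1" by (simp add: cis_mult)
  have cmh: "cis (- h) = complex_of_real c - \<i> * complex_of_real s"
    unfolding c_def s_def by (simp add: cis.ctr Complex_eq)
  have cph: "cis h = complex_of_real c + \<i> * complex_of_real s"
    unfolding c_def s_def by (simp add: cis.ctr Complex_eq)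
  define E where "E = cis ((2 * th - pi) * (x / 2))"
  have e1: "cis ((th - pi) * x) = E * cis (- h)"
  proof -
    have "(th - pi) * x = (2 * th - pi) * (x / 2) + (- h)" unfolding h_def by (simp add: field_simps)
    then show ?thesis unfolding E_def by (simp only: cis_mult)
  qed
  have e2: "cis ((2 * th - pi) * ((x - 1) / 2)) = E * cis (- th) * \<i>"
  proof -
    have "(2 * th - pi) * ((x - 1) / 2) = (2 * th - pi) * (x / 2) + (- th) + pi / 2" by (simp add: field_simps)
    then have "cis ((2 * th - pi) * ((x - 1) / 2)) = E * cis (- th) * cis (pi / 2)"
      unfolding E_def by (simp only: cis_mult)
    then show ?thesis by (simp add: cis_pi_half)
  qed
  have W: "cis th * (E * cis (- th) * \<i> * w) = E * (\<i> * w)" for w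
  proof -
    have "cis th * (E * cis (- th) * \<i> * w) = (cis th * cis (- th)) * E * \<i> * w" by (simp add: mult_ac)
    then show ?thesis using g by simp
  qed
  show "Psi th x = (Psi (2 * th) (x / 2) + cis th * Psi (2 * th) ((x - 1) / 2)) / 4"
  proof -
    define R3 where "R3 = complex_of_real (pi^2 * s / (- c)^2) + \<i> * complex_of_real (- (2 * th - pi) * pi / (- c))"
    define R2 where "R2 = complex_of_real (pi^2 * c / s^2) + \<i> * complex_of_real (- (2 * th - pi) * pi / s)"
    define L where "L = (complex_of_real c - \<i> * complex_of_real s) *
        (complex_of_real (pi^2 * (c^2 - s^2) / (2 * s * c)^2) + \<i> * complex_of_real (- (th - pi) * pi / (2 * s * c)))"
    have P3: "Psi (2 * th) ((x - 1) / 2) = E * cis (- th) * \<i> * R3"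
      unfolding Psi_def e2 s2 R3_def by (simp add: Complex_eq)
    have P2: "Psi (2 * th) (x / 2) = E * R2"
      unfolding Psi_def E_def s1 R2_def by (simp add: Complex_eq)
    have P1: "Psi th x = E * L"
      unfolding Psi_def e1 cmh sinx cosx L_def by (simp add: Complex_eq mult_ac)
    have L: "L = (R2 + \<i> * R3) / 4" unfolding L_def R2_def R3_def by (rule core1[OF sc])
    have "(Psi (2 * th) (x / 2) + cis th * Psi (2 * th) ((x - 1) / 2)) / 4 = (E * R2 + E * (\<i> * R3)) / 4"
      unfolding P2 P3 W ..
    also have "\<dots> = E * ((R2 + \<i> * R3) / 4)" by (simp add: algebra_simps)
    finally show ?thesis unfolding P1 L by (rule sym)
  qed
  define F where "F = cis ((2 * th - 2 * pi - pi) * (x / 2))"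
  have f1: "cis ((th - pi) * x) = F * cis h"
  proof -
    have "(th - pi) * x = (2 * th - 2 * pi - pi) * (x / 2) + h" unfolding h_def by (simp add: field_simps)
    then show ?thesis unfolding F_def by (simp only: cis_mult)
  qed
  have f2: "cis ((2 * th - 2 * pi - pi) * ((x - 1) / 2)) = - (F * cis (- th) * \<i>)"
  proof -
    have "(2 * th - 2 * pi - pi) * ((x - 1) / 2) = (2 * th - 2 * pi - pi) * (x / 2) + (- th) + pi / 2 + pi"
      by (simp add: field_simps)
    then have "cis ((2 * th - 2 * pi - pi) * ((x - 1) / 2)) = F * cis (- th) * cis (pi / 2) * cis pi"
      unfolding F_def by (simp only: cis_mult)
    then show ?thesis by (simp add: cis_pi_half)
  qed
  show "Psi th x = (Psi (2 * th - 2 * pi) (x / 2) + cis th * Psi (2 * th - 2 * pi) ((x - 1) / 2)) / 4"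
  proof -
    define R3 where "R3 = complex_of_real (pi^2 * s / (- c)^2) + \<i> * complex_of_real (- (2 * th - 2 * pi - pi) * pi / (- c))"
    define R2 where "R2 = complex_of_real (pi^2 * c / s^2) + \<i> * complex_of_real (- (2 * th - 2 * pi - pi) * pi / s)"
    define L where "L = (complex_of_real c + \<i> * complex_of_real s) *
        (complex_of_real (pi^2 * (c^2 - s^2) / (2 * s * c)^2) + \<i> * complex_of_real (- (th - pi) * pi / (2 * s * c)))"
    have P3: "Psi (2 * th - 2 * pi) ((x - 1) / 2) = - (F * cis (- th) * \<i> * R3)"
      unfolding Psi_def f2 s2 R3_def by (simp add: Complex_eq)
    have P2: "Psi (2 * th - 2 * pi) (x / 2) = F * R2"
      unfolding Psi_def F_def s1 R2_def by (simp add: Complex_eq)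
    have P1: "Psi th x = F * L"
      unfolding Psi_def f1 cph sinx cosx L_def by (simp add: Complex_eq mult_ac)
    have L: "L = (R2 - \<i> * R3) / 4" unfolding L_def R2_def R3_def by (rule core2[OF sc])
    have W2: "cis th * - (F * cis (- th) * \<i> * w) = - (F * (\<i> * w))" for w
    proof -
      have "cis th * - (F * cis (- th) * \<i> * w) = - ((cis th * cis (- th)) * F * \<i> * w)" by (simp add: mult_ac)
      then show ?thesis using g by simp
    qed
    have "(Psi (2 * th - 2 * pi) (x / 2) + cis th * Psi (2 * th - 2 * pi) ((x - 1) / 2)) / 4 = (F * R2 + - (F * (\<i> * R3))) / 4"
      unfolding P2 P3 W2 ..
    also have "\<dots> = F * ((R2 - \<i> * R3) / 4)" by (simp add: algebra_simps)
    finally show ?thesis unfolding P1 L by (rule sym)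
  qed
qed


lemma sin_err: "\<bar>sin u - u\<bar> \<le> \<bar>u\<bar>^3 / 6" for u :: real
  using Maclaurin_sin_bound[of u 3] by (simp add: sin_coeff_def numeral_3_eq_3 lessThan_Suc fact_numeral)

lemma cos_err: "\<bar>cos u - 1\<bar> \<le> u^2 / 2" for u :: real
proof -
  have "cos u = 1 - 2 * (sin (u / 2))^2" using cos_double_sin[of "u / 2"] by simp
  moreover have "(sin (u / 2))^2 \<le> (u / 2)^2"
    using abs_sin_x_le_abs_x[of "u / 2"] by (metis abs_ge_zero power2_abs power_mono)
  ultimately show ?thesis by (simp add: power2_eq_square field_simps)
qed

lemma sin_lower: fixes u :: real assumes "\<bar>u\<bar> \<le> 2" shows "\<bar>u\<bar> / 3 \<le> \<bar>sin u\<bar>"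
proof -
  have "\<bar>u\<bar>^3 / 6 = \<bar>u\<bar> * (u^2 / 6)" by (simp add: power2_eq_square power3_eq_cube abs_mult_self_eq)
  moreover have "u^2 \<le> 4" using assms by (metis abs_ge_zero power2_abs power_mono numeral_Bit0 power2_eq_square
      mult_2 semiring_norm(2) abs_le_square_iff abs_numeral)
  then have "\<bar>u\<bar> * (u^2 / 6) \<le> \<bar>u\<bar> * (2 / 3)" by (intro mult_left_mono) auto
  ultimately have "\<bar>u\<bar>^3 / 6 \<le> \<bar>u\<bar> * (2/3)" by simp
  then show ?thesis using sin_err[of u] by linarith
qed

lemma ratio_bound:
  fixes a d N D :: real
  assumes "\<bar>a\<bar> \<le> N" "0 < D" "D \<le> \<bar>d\<bar>"
  shows "\<bar>a / d\<bar> \<le> N / D"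
proof -
  have "\<bar>a / d\<bar> = \<bar>a\<bar> / \<bar>d\<bar>" by (simp add: abs_divide)
  also have "\<dots> \<le> N / D" using assms by (intro frac_le) auto
  finally show ?thesis .
qed

lemma abs_scale: fixes a b c :: real shows "\<bar>a\<bar> \<le> b \<Longrightarrow> 0 \<le> c \<Longrightarrow> \<bar>c * a\<bar> \<le> c * b"
  by (simp add: abs_mult mult_left_mono)

lemma RQ:
  fixes x :: real assumes "x \<noteq> 0" "\<bar>x\<bar> \<le> 1/2"
  shows "\<bar>pi / sin (pi * x) - 1 / x\<bar> \<le> pi^2"
proof -
  define u where "u = pi * x"
  have u0: "u \<noteq> 0" using assms by (simp add: u_def)
  have u2: "\<bar>u\<bar> \<le> 2"
  proof -
    have "\<bar>u\<bar> = pi * \<bar>x\<bar>" by (simp add: u_def abs_mult)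
    also have "\<dots> \<le> 4 * (1/2)" using assms pi_less_4 pi_gt_zero by (intro mult_mono) auto
    finally show ?thesis by simp
  qed
  have su: "\<bar>u\<bar> / 3 \<le> \<bar>sin u\<bar>" by (rule sin_lower[OF u2])
  have s0: "sin u \<noteq> 0" using su u0 by auto
  have eq: "pi / sin (pi * x) - 1 / x = pi * ((u - sin u) / (u * sin u))"
    using u0 s0 assms(1) by (simp add: u_def field_simps)
  have "\<bar>(u - sin u) / (u * sin u)\<bar> \<le> (\<bar>u\<bar>^3 / 6) / (\<bar>u\<bar> * (\<bar>u\<bar> / 3))"
  proof (rule ratio_bound)
    show "\<bar>u - sin u\<bar> \<le> \<bar>u\<bar>^3 / 6" using sin_err[of u] by (simp add: abs_minus_commute)
    show "0 < \<bar>u\<bar> * (\<bar>u\<bar> / 3)" by (intro mult_pos_pos) (use u0 in auto)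
    show "\<bar>u\<bar> * (\<bar>u\<bar> / 3) \<le> \<bar>u * sin u\<bar>" unfolding abs_mult by (rule mult_left_mono[OF su]) simp
  qed
  also have "\<dots> = \<bar>u\<bar> / 2" using u0 by (simp add: power3_eq_cube field_simps)
  also have "\<dots> \<le> 1" using u2 by simp
  finally have "\<bar>(u - sin u) / (u * sin u)\<bar> \<le> 1" .
  then have "\<bar>pi * ((u - sin u) / (u * sin u))\<bar> \<le> pi * 1"
    by (rule abs_scale) simp
  also have "\<dots> \<le> pi * pi" using pi_ge_two by (intro mult_left_mono) auto
  also have "\<dots> = pi^2" by (simp add: power2_eq_square)
  finally show ?thesis unfolding eq .
qed

lemma RP:
  fixes x :: real assumes "x \<noteq> 0" "\<bar>x\<bar> \<le> 1/2"
  shows "\<bar>pi^2 * cos (pi * x) / sin (pi * x)^2 - 1 / x^2\<bar> \<le> 9 * pi^2"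
proof -
  define u where "u = pi * x"
  have u0: "u \<noteq> 0" using assms by (simp add: u_def)
  have u2: "\<bar>u\<bar> \<le> 2"
  proof -
    have "\<bar>u\<bar> = pi * \<bar>x\<bar>" by (simp add: u_def abs_mult)
    also have "\<dots> \<le> 4 * (1/2)" using assms pi_less_4 pi_gt_zero by (intro mult_mono) auto
    finally show ?thesis by simp
  qed
  have su: "\<bar>u\<bar> / 3 \<le> \<bar>sin u\<bar>" by (rule sin_lower[OF u2])
  have s0: "sin u \<noteq> 0" using su u0 by auto
  have eq: "pi^2 * cos (pi * x) / sin (pi * x)^2 - 1 / x^2 = pi^2 * ((u^2 * cos u - (sin u)^2) / (u^2 * (sin u)^2))"
    using u0 s0 assms(1) by (simp add: u_def field_simps)
  have num: "\<bar>u^2 * cos u - (sin u)^2\<bar> \<le> u^2 * (u^2 / 2) + (\<bar>u\<bar>^3 / 6) * (2 * \<bar>u\<bar>)"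
  proof -
    have "u^2 * cos u - (sin u)^2 = u^2 * (cos u - 1) + (u - sin u) * (u + sin u)"
      by (simp add: algebra_simps power2_eq_square)
    moreover have "\<bar>u^2 * (cos u - 1)\<bar> \<le> u^2 * (u^2 / 2)"
    proof -
      have "\<bar>u^2 * (cos u - 1)\<bar> = u^2 * \<bar>cos u - 1\<bar>" by (simp add: abs_mult)
      also have "\<dots> \<le> u^2 * (u^2 / 2)" using cos_err[of u] by (intro mult_left_mono) auto
      finally show ?thesis .
    qed
    moreover have "\<bar>(u - sin u) * (u + sin u)\<bar> \<le> (\<bar>u\<bar>^3 / 6) * (2 * \<bar>u\<bar>)"
    proof -
      have "\<bar>u + sin u\<bar> \<le> 2 * \<bar>u\<bar>" using abs_sin_x_le_abs_x[of u] by linarith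
      moreover have "\<bar>u - sin u\<bar> \<le> \<bar>u\<bar>^3 / 6" using sin_err[of u] by (simp add: abs_minus_commute)
      ultimately show ?thesis unfolding abs_mult by (intro mult_mono) auto
    qed
    ultimately show ?thesis by (smt (verit))
  qed
  have "\<bar>(u^2 * cos u - (sin u)^2) / (u^2 * (sin u)^2)\<bar> \<le>
      (u^2 * (u^2 / 2) + (\<bar>u\<bar>^3 / 6) * (2 * \<bar>u\<bar>)) / (u^2 * (\<bar>u\<bar> / 3)^2)"
  proof (rule ratio_bound[OF num])
    show "0 < u^2 * (\<bar>u\<bar> / 3)^2" using u0 by simp
    have "(\<bar>u\<bar> / 3)^2 \<le> (sin u)^2" using su by (metis abs_ge_zero power2_abs power_mono divide_nonneg_nonneg
        zero_le_numeral)
    then show "u^2 * (\<bar>u\<bar> / 3)^2 \<le> \<bar>u^2 * (sin u)^2\<bar>" by (simp add: abs_mult mult_left_mono)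
  qed
  also have "\<dots> = 15 / 2" using u0
    by (simp add: power2_eq_square power3_eq_cube field_simps abs_mult_self_eq)
  finally have "\<bar>(u^2 * cos u - (sin u)^2) / (u^2 * (sin u)^2)\<bar> \<le> 15 / 2" .
  then have "\<bar>(u^2 * cos u - (sin u)^2) / (u^2 * (sin u)^2)\<bar> \<le> 9" by linarith
  then have "\<bar>pi^2 * ((u^2 * cos u - (sin u)^2) / (u^2 * (sin u)^2))\<bar> \<le> pi^2 * 9"
    by (rule abs_scale) simp
  then show ?thesis unfolding eq by simp
qed

lemma C1: "cmod (cis v - 1 - \<i> * complex_of_real v) \<le> v^2" if "\<bar>v\<bar> \<le> 2" for v :: real
proof -
  have "cmod (cis v - 1 - \<i> * complex_of_real v) \<le> \<bar>cos v - 1\<bar> + \<bar>sin v - v\<bar>"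
    using cmod_le[of "cis v - 1 - \<i> * complex_of_real v"] by simp
  also have "\<dots> \<le> v^2 / 2 + \<bar>v\<bar>^3 / 6" using cos_err[of v] sin_err[of v] by simp
  also have "\<bar>v\<bar>^3 / 6 \<le> v^2 / 2"
  proof -
    have "\<bar>v\<bar>^3 = v^2 * \<bar>v\<bar>" by (simp add: power2_eq_square power3_eq_cube abs_mult_self_eq)
    also have "\<dots> \<le> v^2 * 2" using that by (intro mult_left_mono) auto
    finally have "\<bar>v\<bar>^3 \<le> v^2 * 2" .
    then show ?thesis using zero_le_power2[of v] by linarith
  qed
  finally show ?thesis by simp
qed

lemma C2: "cmod (cis v - 1) \<le> 2 * \<bar>v\<bar>" if "\<bar>v\<bar> \<le> 2" for v :: real
proof -
  have "cmod (cis v - 1) \<le> \<bar>cos v - 1\<bar> + \<bar>sin v\<bar>"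
    using cmod_le[of "cis v - 1"] by simp
  also have "\<dots> \<le> v^2 / 2 + \<bar>v\<bar>" using cos_err[of v] abs_sin_x_le_abs_x[of v] by simp
  also have "v^2 / 2 \<le> \<bar>v\<bar>"
  proof -
    have "v^2 = \<bar>v\<bar> * \<bar>v\<bar>" by (simp add: power2_eq_square abs_mult_self_eq)
    also have "\<dots> \<le> \<bar>v\<bar> * 2" using that by (intro mult_left_mono) auto
    finally show ?thesis by simp
  qed
  finally show ?thesis by simp
qed


lemma ident4:
  fixes E P Q B X :: complex assumes "X \<noteq> 0"
  shows "E * (P - \<i> * (B * Q)) - 1 / X^2 =
    (E - 1 - \<i> * (B * X)) / X^2 - \<i> * B * (E - 1) / X + E * (P - 1 / X^2) - \<i> * B * E * (Q - 1 / X)"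
  using assms by (simp add: field_simps power2_eq_square)

lemma norm4: "cmod (A - B + C - D) \<le> cmod A + cmod B + cmod C + cmod D"
proof -
  have "cmod (A - B + C - D) \<le> cmod (A - B + C) + cmod D" by (rule norm_triangle_ineq4)
  also have "cmod (A - B + C) \<le> cmod (A - B) + cmod C" by (rule norm_triangle_ineq)
  also have "cmod (A - B) \<le> cmod A + cmod B" by (rule norm_triangle_ineq4)
  finally show ?thesis by simp
qed

lemma norm_cis_real: "cmod (cis v * complex_of_real r) = \<bar>r\<bar>"
  by (simp add: norm_mult)

lemma norm_cis_real2: "cmod (\<i> * complex_of_real b * cis v * complex_of_real r) = \<bar>b\<bar> * \<bar>r\<bar>"
  by (simp add: norm_mult)

lemma cmod_int_real_pow: "cmod ((complex_of_int n - complex_of_real x) ^ k) = \<bar>of_int n - x\<bar> ^ k"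
  by (simp add: norm_power cmod_int_real)

lemma Psi_bound:
  assumes "0 \<le> th" "th \<le> 2 * pi" "x \<noteq> 0" "\<bar>x\<bar> \<le> 1/2"
  shows "cmod (Psi th x - 1 / complex_of_real (x^2)) \<le> 12 * pi^2 + pi^3"
proof -
  define b where "b = th - pi"
  define v where "v = b * x"
  define P where "P = pi^2 * cos (pi * x) / sin (pi * x) ^ 2"
  define Q where "Q = pi / sin (pi * x)"
  define E where "E = cis v"
  have bb: "\<bar>b\<bar> \<le> pi" using assms(1,2) unfolding b_def by auto
  have vv: "\<bar>v\<bar> \<le> 2"
  proof -
    have "\<bar>v\<bar> = \<bar>b\<bar> * \<bar>x\<bar>" by (simp add: v_def abs_mult)
    also have "\<dots> \<le> 4 * (1/2)" using bb assms(4) pi_less_4 by (intro mult_mono) auto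
    finally show ?thesis by simp
  qed
  have X0: "complex_of_real x \<noteq> 0" using assms(3) by simp
  have bq: "- (th - pi) * pi / sin (pi * x) = - (b * Q)"
    by (simp only: b_def Q_def times_divide_eq_right minus_divide_left mult_minus_left)
  have "Psi th x = E * (complex_of_real P - \<i> * (complex_of_real b * complex_of_real Q))"
    unfolding Psi_def bq unfolding E_def v_def P_def b_def by (simp add: Complex_eq mult_ac)
  then have eq: "Psi th x - 1 / complex_of_real (x^2) =
    (E - 1 - \<i> * complex_of_real v) / complex_of_real x ^ 2 - \<i> * complex_of_real b * (E - 1) / complex_of_real x
    + E * complex_of_real (P - 1 / x^2) - \<i> * complex_of_real b * E * complex_of_real (Q - 1 / x)"
    using ident4[OF X0, of E "complex_of_real P" "complex_of_real b" "complex_of_real Q"]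
    by (simp add: v_def)
  have n1: "cmod ((E - 1 - \<i> * complex_of_real v) / complex_of_real x ^ 2) \<le> pi^2"
  proof -
    have "cmod ((E - 1 - \<i> * complex_of_real v) / complex_of_real x ^ 2) = cmod (E - 1 - \<i> * complex_of_real v) / x^2"
      by (simp add: norm_divide norm_power)
    also have "\<dots> \<le> v^2 / x^2" unfolding E_def using C1[OF vv] by (simp add: divide_right_mono)
    also have "\<dots> = b^2" using assms(3) by (simp add: v_def power_mult_distrib)
    also have "\<dots> \<le> pi^2" using bb by (metis abs_ge_zero power2_abs power_mono)
    finally show ?thesis .
  qed
  have n2: "cmod (\<i> * complex_of_real b * (E - 1) / complex_of_real x) \<le> 2 * pi^2"
  proof -
    have "cmod (\<i> * complex_of_real b * (E - 1) / complex_of_real x) = \<bar>b\<bar> * cmod (E - 1) / \<bar>x\<bar>"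
      by (simp add: norm_divide norm_mult)
    also have "\<dots> \<le> \<bar>b\<bar> * (2 * \<bar>v\<bar>) / \<bar>x\<bar>" unfolding E_def using C2[OF vv]
      by (intro divide_right_mono mult_left_mono) auto
    also have "\<dots> = 2 * b^2" using assms(3) by (simp add: v_def abs_mult power2_eq_square abs_mult_self_eq)
    also have "\<dots> \<le> 2 * pi^2" using bb by (simp, metis abs_ge_zero power2_abs power_mono)
    finally show ?thesis .
  qed
  have n3: "cmod (E * complex_of_real (P - 1 / x^2)) \<le> 9 * pi^2"
    unfolding E_def norm_cis_real P_def using RP[OF assms(3,4)] .
  have n4: "cmod (\<i> * complex_of_real b * E * complex_of_real (Q - 1 / x)) \<le> pi^3"
  proof -
    have "cmod (\<i> * complex_of_real b * E * complex_of_real (Q - 1 / x)) = \<bar>b\<bar> * \<bar>Q - 1 / x\<bar>"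
      unfolding E_def by (rule norm_cis_real2)
    also have "\<dots> \<le> pi * pi^2" unfolding Q_def using bb RQ[OF assms(3,4)] by (intro mult_mono) auto
    also have "\<dots> = pi^3" by (simp add: power2_eq_square power3_eq_cube)
    finally show ?thesis .
  qed
  show ?thesis unfolding eq using norm4 n1 n2 n3 n4 by (smt (verit))
qed

lemma inv_sq_mono: fixes a b :: real shows "0 < a \<Longrightarrow> a \<le> b \<Longrightarrow> 1 / b^2 \<le> 1 / a^2"
  by (intro divide_left_mono power_mono) (auto intro!: mult_pos_pos)

lemma T_bound:
  "\<exists>B. \<forall>th x. x \<noteq> 0 \<and> \<bar>x\<bar> \<le> 1/2 \<longrightarrow> cmod (Tm 2 th x - 1 / complex_of_real (x^2)) \<le> B"
proof -
  define g :: "int \<Rightarrow> real" where "g = (\<lambda>n::int. 1 / \<bar>of_int n - 1/2\<bar> ^ 2 + 1 / \<bar>of_int n - (- 1/2)\<bar> ^ 2)"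
  have sg: "g summable_on UNIV" unfolding g_def
    by (intro summable_on_add summable_inv_pow) auto
  have sg': "g summable_on (- {0})" by (rule summable_on_subset_banach[OF sg]) auto
  have "cmod (Tm 2 th x - 1 / complex_of_real (x^2)) \<le> infsum g (- {0})"
    if x: "x \<noteq> 0" "\<bar>x\<bar> \<le> 1/2" for th x
  proof -
    define f where "f = (\<lambda>n::int. cis (th * of_int n) / complex_of_real ((of_int n - x) ^ 2))"
    have sf: "f summable_on UNIV" unfolding f_def by (rule sumT) simp
    have sf': "f summable_on (- {0})" by (rule summable_on_subset_banach[OF sf]) auto
    have U: "insert (0::int) (- {0}) = UNIV" by auto
    have "Tm 2 th x = infsum f (insert 0 (- {0}))" unfolding U Tm_def f_def ..
    also have "\<dots> = f 0 + infsum f (- {0})" by (rule infsum_insert[OF sf']) simp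
    finally have "Tm 2 th x - 1 / complex_of_real (x^2) = infsum f (- {0})" by (simp add: f_def)
    also have "cmod (infsum f (- {0})) \<le> infsum g (- {0})"
    proof (rule norm_infsum_le[OF has_sum_infsum[OF sf'] has_sum_infsum[OF sg']])
      fix n :: int assume "n \<in> - {0}"
      then have n0: "n \<noteq> 0" by simp
      have nf: "norm (f n) = 1 / \<bar>of_int n - x\<bar> ^ 2" unfolding f_def
        by (simp add: norm_divide del: of_real_power of_real_diff)
      show "norm (f n) \<le> g n"
      proof (cases "n > 0")
        case True
        then have "(1::real) \<le> of_int n" by simp
        then have A: "1 / \<bar>of_int n - x\<bar> ^ 2 \<le> 1 / \<bar>of_int n - 1/2\<bar> ^ 2"
          using x by (intro inv_sq_mono) auto
        have B: "0 \<le> 1 / \<bar>of_int n - (- 1/2::real)\<bar> ^ 2" by simp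
        show ?thesis unfolding nf g_def using A B by linarith
      next
        case False
        then have "of_int n \<le> (-1::real)" using n0 by simp
        then have A: "1 / \<bar>of_int n - x\<bar> ^ 2 \<le> 1 / \<bar>of_int n - (- 1/2)\<bar> ^ 2"
          using x by (intro inv_sq_mono) auto
        have B: "0 \<le> 1 / \<bar>of_int n - 1/2::real\<bar> ^ 2" by simp
        show ?thesis unfolding nf g_def using A B by linarith
      qed
    qed
    finally show ?thesis .
  qed
  then show ?thesis by blast
qed


definition Dd :: "real \<Rightarrow> real \<Rightarrow> complex" where "Dd th x = Tm 2 th x - Psi th x"

lemma D_bound: "\<exists>B. \<forall>th (x::real). x \<notin> \<int> \<longrightarrow> 0 \<le> th \<longrightarrow> th \<le> 2 * pi \<longrightarrow> cmod (Dd th x) \<le> B"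
proof -
  obtain B1 where B1: "\<And>th x. x \<noteq> 0 \<Longrightarrow> \<bar>x\<bar> \<le> 1/2 \<Longrightarrow> cmod (Tm 2 th x - 1 / complex_of_real (x^2)) \<le> B1"
    using T_bound by blast
  have "cmod (Dd th x) \<le> B1 + (12 * pi^2 + pi^3)" if x: "x \<notin> \<int>" and th: "0 \<le> th" "th \<le> 2 * pi" for th x
  proof -
    define k where "k = floor (x + 1/2)"
    define y where "y = x - of_int k"
    have xy: "x = y + of_int k" by (simp add: y_def)
    have y1: "\<bar>y\<bar> \<le> 1/2" unfolding y_def k_def by linarith
    have y0: "y \<noteq> 0" using x unfolding y_def by auto
    have "Dd th x = cis (th * of_int k) * Dd th y"
      unfolding Dd_def xy Tm_shift Psi_shift by (simp add: algebra_simps)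
    then have "cmod (Dd th x) = cmod (Dd th y)" by (simp add: norm_mult)
    also have "Dd th y = (Tm 2 th y - 1 / complex_of_real (y^2)) - (Psi th y - 1 / complex_of_real (y^2))"
      unfolding Dd_def by simp
    also have "cmod \<dots> \<le> cmod (Tm 2 th y - 1 / complex_of_real (y^2)) + cmod (Psi th y - 1 / complex_of_real (y^2))"
      by (rule norm_triangle_ineq4)
    also have "\<dots> \<le> B1 + (12 * pi^2 + pi^3)"
      using B1[OF y0 y1, of th] Psi_bound[OF th y0 y1] by (rule add_mono)
    finally show ?thesis .
  qed
  then show ?thesis by blast
qed

lemma D_double:
  assumes "x \<notin> \<int>" "0 \<le> th" "th < 2 * pi"
  shows "Dd th x = (Dd (if th < pi then 2 * th else 2 * th - 2 * pi) (x / 2) +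
      cis th * Dd (if th < pi then 2 * th else 2 * th - 2 * pi) ((x - 1) / 2)) / 4"
proof (cases "th < pi")
  case True
  then show ?thesis unfolding Dd_def using Tm_double[OF assms(1), of th] Psi_double(1)[OF assms(1), of th]
    by (simp add: algebra_simps diff_divide_distrib)
next
  case False
  have "Tm 2 th x = (Tm 2 (2 * th - 2 * pi) (x / 2) + cis th * Tm 2 (2 * th - 2 * pi) ((x - 1) / 2)) / 4"
    unfolding Tm_period by (rule Tm_double[OF assms(1)])
  then show ?thesis unfolding Dd_def using False Psi_double(2)[OF assms(1), of th]
    by (simp add: algebra_simps diff_divide_distrib)
qed

lemma D_zero:
  assumes "x \<notin> \<int>" "0 \<le> th" "th < 2 * pi"
  shows "Dd th x = 0"
proof -
  obtain B where B: "\<And>th x. x \<notin> \<int> \<Longrightarrow> 0 \<le> th \<Longrightarrow> th \<le> 2 * pi \<Longrightarrow> cmod (Dd th x) \<le> B"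
    using D_bound by blast
  have main: "\<forall>th (x::real). x \<notin> \<int> \<longrightarrow> 0 \<le> th \<longrightarrow> th < 2 * pi \<longrightarrow> cmod (Dd th x) \<le> B / 2 ^ n" for n
  proof (induction n)
    case 0
    then show ?case using B by auto
  next
    case (Suc n)
    show ?case
    proof (intro allI impI)
      fix th and x :: real assume x: "x \<notin> \<int>" and th: "0 \<le> th" "th < 2 * pi"
      define ph where "ph = (if th < pi then 2 * th else 2 * th - 2 * pi)"
      have ph: "0 \<le> ph" "ph < 2 * pi" unfolding ph_def using th by auto
      have E: "Dd th x = (Dd ph (x / 2) + cis th * Dd ph ((x - 1) / 2)) / 4"
        unfolding ph_def by (rule D_double[OF x th])
      have "cmod (Dd th x) = cmod (Dd ph (x / 2) + cis th * Dd ph ((x - 1) / 2)) / 4"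
        by (subst E) (simp add: norm_divide)
      also have "\<dots> \<le> (cmod (Dd ph (x / 2)) + cmod (Dd ph ((x - 1) / 2))) / 4"
        using norm_triangle_ineq[of "Dd ph (x / 2)" "cis th * Dd ph ((x - 1) / 2)"]
        by (simp add: norm_mult divide_right_mono)
      also have "\<dots> \<le> (B / 2 ^ n + B / 2 ^ n) / 4"
        using Suc.IH notint_half[OF x] ph by (intro divide_right_mono add_mono) auto
      also have "\<dots> = B / 2 ^ Suc n" by simp
      finally show "cmod (Dd th x) \<le> B / 2 ^ Suc n" .
    qed
  qed
  have lim: "(\<lambda>n. B / 2 ^ n) \<longlonglongrightarrow> 0" by real_asymp
  have "cmod (Dd th x) \<le> 0"
    by (rule LIMSEQ_le_const[OF lim]) (use main assms in auto)
  then show ?thesis by simp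
qed

lemma S2_base:
  assumes "0 < x" "x < 1" "0 < a" "a < pi"
  shows "Sf 2 x a < 0"
proof -
  define th where "th = a + pi"
  have xn: "x \<notin> \<int>" by (rule unit_notint[OF assms(1,2)])
  have "Tm 2 th x = Psi th x" using D_zero[OF xn, of th] assms unfolding Dd_def th_def by auto
  moreover have "Tm 2 th x = cis (a * x) * Complex (Cf 2 x a) (Sf 2 x a)"
    using Tm_CS[of 2 th x] unfolding th_def by simp
  moreover have "Psi th x = cis (a * x) * Complex (pi^2 * cos (pi * x) / sin (pi * x) ^ 2) (- a * pi / sin (pi * x))"
    unfolding Psi_def th_def by simp
  ultimately have "Complex (Cf 2 x a) (Sf 2 x a) = Complex (pi^2 * cos (pi * x) / sin (pi * x) ^ 2) (- a * pi / sin (pi * x))"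
    by (simp add: cis_neq_zero)
  then have S: "Sf 2 x a = - a * pi / sin (pi * x)" by simp
  have "0 < sin (pi * x)" using assms(1,2) by (intro sin_gt_zero) auto
  moreover have "0 < a * pi" using assms(3) by simp
  ultimately show ?thesis unfolding S by (simp add: divide_pos_pos)
qed


lemma CS_nonzero_unit:
  assumes "0 < x" "x < 1" "0 < a" "a < pi" "m \<ge> 2"
  shows "Cf m x a \<noteq> 0 \<or> Sf m x a \<noteq> 0"
proof -
  have M: "(even m \<longrightarrow> (\<forall>a. 0 < a \<and> a < pi \<longrightarrow> Sf m x a < 0)) \<and>
         (odd m \<longrightarrow> (\<forall>a. 0 \<le> a \<and> a < pi \<longrightarrow> Cf m x a < 0))"
    by (rule main_induct[OF assms(1,2) S2_base[OF assms(1,2)] assms(5)])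
  show ?thesis
  proof (cases "even m")
    case True
    then have "Sf m x a < 0" using M assms(3,4) by blast
    then show ?thesis by simp
  next
    case False
    then have "Cf m x a < 0" using M assms(3,4) by auto
    then show ?thesis by simp
  qed
qed

theorem corollary4p8:
  fixes lam x :: real and m :: nat
  assumes "0 < lam" and "lam < 1" and "lam \<noteq> 1/2"
    and "x \<notin> \<int>"
    and "m \<ge> 2"
  shows "lerchH lam (complex_of_real x) m \<noteq> 0"
proof -
  define a where "a = 2 * pi * lam - pi"
  have aeq: "2 * pi * lam - pi = a" by (simp add: a_def)
  have H: "lerchH lam (complex_of_real x) m = cis (a * x) * Complex (Cf m x a) (Sf m x a)"
    unfolding lerchH_Tm Tm_CS[OF assms(5)] aeq ..
  define k where "k = floor x"
  define x0 where "x0 = x - of_int k"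
  have xx: "x = x0 + of_int k" by (simp add: x0_def)
  have x0: "0 < x0" "x0 < 1"
  proof -
    have "0 \<le> x0" "x0 < 1" unfolding x0_def k_def by linarith+
    moreover have "x0 \<noteq> 0" using assms(4) unfolding x0_def by auto
    ultimately show "0 < x0" "x0 < 1" by auto
  qed
  define b where "b = \<bar>a\<bar>"
  have ab: "0 < b" "b < pi"
  proof -
    have "a \<noteq> 0" using assms(3) unfolding a_def by auto
    moreover have "- pi < a" "a < pi" using assms(1,2) pi_gt_zero unfolding a_def
      by (auto simp: field_simps intro: mult_strict_left_mono)
    ultimately show "0 < b" "b < pi" unfolding b_def by auto
  qed
  have "Cf m x0 b \<noteq> 0 \<or> Sf m x0 b \<noteq> 0" by (rule CS_nonzero_unit[OF x0 ab assms(5)])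
  moreover have "Cf m x0 a = Cf m x0 b" "Sf m x0 a = Sf m x0 b \<or> Sf m x0 a = - Sf m x0 b"
    unfolding b_def by (cases "a \<ge> 0"; simp add: Cf_neg Sf_neg)+
  ultimately have "Cf m x0 a \<noteq> 0 \<or> Sf m x0 a \<noteq> 0" by auto
  then have "Cf m x a \<noteq> 0 \<or> Sf m x a \<noteq> 0"
    unfolding xx Cf_shift Sf_shift by (auto simp: sg_def)
  then have "Complex (Cf m x a) (Sf m x a) \<noteq> 0" by (simp add: Complex_eq_0)
  moreover have "cis (a * x) \<noteq> 0" by simp
  ultimately show ?thesis unfolding H by simp
qed

end
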